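(* Let $A=\{a_1,a_2,\ldots,a_k\}$ be a set of $k\ge1$ distinct positive integers, let $\tau$ be a permutation of $\{1,2,\ldots,k\}$, and let $A_{\tau(j)}=\{a_{\tau(1)},\ldots,a_{\tau(j)}\}$ for $j=1,\ldots,k$, with $A_{\tau(0)}=\emptyset$. Then the following are equivalent: (a) The elements of $A$ are pairwise co-prime (i.e. every $2$-element subset of $A$ has gcd $1$). (b) \[ 2|A|-1 = \left( 1 + 4 \sum_{d=1}^{\sup A} \mu(d)\, v(A,d)\,(v(A,d)-1) \right)^{1/2}. \] (c) \[ 2|A|-1 = \left( 1 + 8 \sum_{j=1}^k \sum_{d\mid a_{\tau(j)}} \mu(d)\, v(A_{\tau(j-1)},d) \right)^{1/2}. \]
   Context: $\sup A$ is the largest element of $A$. $\mu$ is the Möbius function. For a finite set $X$ of positive integers and a positive integer $d$, $v(X,d)$ is the number of multiples of $d$ in $X$ (so $v(\emptyset,d)=0$). *)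

theory Defs
  imports "HOL-Computational_Algebra.Computational_Algebra" "HOL-Combinatorics.Permutations"
begin

text \<open>Moebius function on positive integers (value at 0 is irrelevant; set to 0).\<close>
definition moebius_mu :: "nat \<Rightarrow> int" where
  "moebius_mu d = (if d = 0 \<or> \<not> squarefree d then 0
                   else (-1) ^ card (prime_factors d))"

definition v :: "nat set \<Rightarrow> nat \<Rightarrow> nat" where
  "v X d = card {x \<in> X. d dvd x}"

end

theory Submission
  imports Defs
begin

lemma mu_1: "moebius_mu 1 = 1"
  by (simp add: moebius_mu_def)

lemma mu_sq: "p ^ 2 dvd d \<Longrightarrow> prime (p::nat) \<Longrightarrow> moebius_mu d = 0"
  unfolding moebius_mu_def using not_squarefreeI[of p d]
  by (metis prime_nat_iff nat_dvd_1_iff_1 not_prime_1)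

lemma mu_mult:
  assumes p: "prime (p::nat)" and nd: "\<not> p dvd d" and d: "d > 0"
  shows "moebius_mu (p * d) = - moebius_mu d"
proof -
  have cop: "coprime p d" using p nd by (simp add: prime_imp_coprime)
  have sq: "squarefree (p * d) \<longleftrightarrow> squarefree d"
    using squarefree_multD[of p d] squarefree_mult_coprime[OF cop] squarefree_prime[OF p] by blast
  have pf: "prime_factors (p * d) = insert p (prime_factors d)"
    using prime_factors_product[of p d] p d prime_prime_factors[OF p] by (auto simp: prime_gt_0_nat)
  have nin: "p \<notin> prime_factors d" using nd by auto
  have c: "card (prime_factors (p * d)) = Suc (card (prime_factors d))"
    using pf nin by simp
  show ?thesis using sq c p d unfolding moebius_mu_def by (auto simp: prime_gt_0_nat)
qed

lemma mu_sum:
  assumes m: "m > (0::nat)"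
  shows "(\<Sum>d | d dvd m. moebius_mu d) = (if m = 1 then 1 else 0)"
proof (cases "m = 1")
  case True
  have "{d. d dvd (1::nat)} = {1}" by auto
  then show ?thesis using True by (simp add: moebius_mu_def)
next
  case False
  then obtain p where p: "prime p" "p dvd m" using m
    by (metis prime_factor_nat)
  define D0 where "D0 = {d. d dvd m \<and> \<not> p dvd d}"
  define D1 where "D1 = {d. d dvd m \<and> p dvd d}"
  define D2 where "D2 = {d. d dvd m \<and> p dvd d \<and> \<not> p^2 dvd d}"
  have fin: "finite {d. d dvd m}" using m by simp
  have fD0: "finite D0" "finite D1" "finite D2" using fin unfolding D0_def D1_def D2_def
    by (auto intro: rev_finite_subset)
  have split: "{d. d dvd m} = D0 \<union> D1" "D0 \<inter> D1 = {}" unfolding D0_def D1_def by auto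
  have s1: "(\<Sum>d | d dvd m. moebius_mu d) = sum moebius_mu D0 + sum moebius_mu D1"
    using split fD0 by (simp add: sum.union_disjoint)
  have s2: "sum moebius_mu D1 = sum moebius_mu D2"
    by (rule sum.mono_neutral_right) (use fD0 in \<open>auto simp: D1_def D2_def intro: mu_sq[OF _ p(1)]\<close>)
  have img: "D2 = (\<lambda>d. p * d) ` D0"
  proof
    show "(\<lambda>d. p * d) ` D0 \<subseteq> D2"
    proof
      fix x assume "x \<in> (\<lambda>d. p * d) ` D0"
      then obtain d where x: "x = p * d" and d: "d dvd m" "\<not> p dvd d" unfolding D0_def by auto
      have "coprime p d" using p d by (simp add: prime_imp_coprime)
      then have "p * d dvd m" using p d by (simp add: divides_mult)
      moreover have "\<not> p^2 dvd p * d" using p d by (auto simp: power2_eq_square)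
      ultimately show "x \<in> D2" unfolding D2_def x by auto
    qed
  next
    show "D2 \<subseteq> (\<lambda>d. p * d) ` D0"
    proof
      fix x assume "x \<in> D2"
      then have x: "x dvd m" "p dvd x" "\<not> p^2 dvd x" unfolding D2_def by auto
      then obtain d where xd: "x = p * d" by auto
      have "\<not> p dvd d" using x xd by (auto simp: power2_eq_square)
      moreover have "d dvd m" using x xd by (metis dvd_mult_right)
      ultimately show "x \<in> (\<lambda>d. p * d) ` D0" unfolding D0_def using xd by auto
    qed
  qed
  have inj: "inj_on (\<lambda>d. p * d) D0" using p by (auto simp: inj_on_def prime_gt_0_nat)
  have s3: "sum moebius_mu D2 = (\<Sum>d\<in>D0. moebius_mu (p * d))"
    unfolding img by (rule sum.reindex[OF inj, unfolded comp_def])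
  have s4: "(\<Sum>d\<in>D0. moebius_mu (p * d)) = - sum moebius_mu D0"
    unfolding sum_negf[symmetric]
    by (rule sum.cong) (use p m in \<open>auto simp: D0_def mu_mult intro!: mu_mult dest: dvd_imp_le\<close>)
  show ?thesis using False s1 s2 s3 s4 by simp
qed


lemma v_sum: "finite X \<Longrightarrow> real (v X d) = (\<Sum>x\<in>X. if d dvd x then 1 else 0)"
  unfolding v_def by (simp add: sum.inter_filter[symmetric])

lemma count_coprime:
  assumes X: "finite X" and n: "n > (0::nat)"
  shows "(\<Sum>d | d dvd n. real_of_int (moebius_mu d) * real (v X d)) = real (card {x\<in>X. coprime x n})"
proof -
  have fD: "finite {d. d dvd n}" using n by simp
  have "(\<Sum>d | d dvd n. real_of_int (moebius_mu d) * real (v X d))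
      = (\<Sum>d | d dvd n. \<Sum>x\<in>X. if d dvd x then real_of_int (moebius_mu d) else 0)"
    by (simp add: v_sum[OF X] sum_distrib_left if_distrib cong: if_cong)
  also have "\<dots> = (\<Sum>x\<in>X. \<Sum>d | d dvd n. if d dvd x then real_of_int (moebius_mu d) else 0)"
    by (rule sum.swap)
  also have "\<dots> = (\<Sum>x\<in>X. \<Sum>d\<in>{d. d dvd n \<and> d dvd x}. real_of_int (moebius_mu d))"
    using fD by (simp add: sum.inter_filter[symmetric] conj_commute)
  also have "\<dots> = (\<Sum>x\<in>X. if coprime x n then 1 else 0)"
  proof (rule sum.cong[OF refl])
    fix x
    have e: "{d. d dvd n \<and> d dvd x} = {d. d dvd gcd x n}" by auto
    have g: "gcd x n > 0" using n by simp
    have "(\<Sum>d\<in>{d. d dvd n \<and> d dvd x}. real_of_int (moebius_mu d))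
        = real_of_int (\<Sum>d | d dvd gcd x n. moebius_mu d)" unfolding e by simp
    also have "\<dots> = (if coprime x n then 1 else 0)"
      unfolding mu_sum[OF g] by (simp add: coprime_iff_gcd_eq_1)
    finally show "(\<Sum>d\<in>{d. d dvd n \<and> d dvd x}. real_of_int (moebius_mu d))
        = (if coprime x n then 1 else 0)" .
  qed
  also have "\<dots> = real (card {x\<in>X. coprime x n})"
    using X by (simp add: sum.inter_filter[symmetric])
  finally show ?thesis .
qed

lemma sqrt_eq:
  assumes "S \<ge> 0" "k \<ge> (1::nat)"
  shows "(2 * real k - 1 = sqrt (1 + 4 * S)) \<longleftrightarrow> S = real k * (real k - 1)"
proof
  assume h: "2 * real k - 1 = sqrt (1 + 4 * S)"
  have "(2 * real k - 1)^2 = 1 + 4 * S" unfolding h using assms by simp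
  then show "S = real k * (real k - 1)" by (simp add: algebra_simps power2_eq_square)
next
  assume "S = real k * (real k - 1)"
  then have "1 + 4 * S = (2 * real k - 1)^2" by (simp add: algebra_simps power2_eq_square)
  then show "2 * real k - 1 = sqrt (1 + 4 * S)" using assms by simp
qed

lemma card_filter_sum_eq:
  assumes I: "finite I" and S: "\<And>i. i \<in> I \<Longrightarrow> finite (S i)"
  shows "(\<Sum>i\<in>I. card {x\<in>S i. R i x}) = (\<Sum>i\<in>I. card (S i)) \<longleftrightarrow> (\<forall>i\<in>I. \<forall>x\<in>S i. R i x)"
proof
  assume h: "(\<Sum>i\<in>I. card {x\<in>S i. R i x}) = (\<Sum>i\<in>I. card (S i))"
  show "\<forall>i\<in>I. \<forall>x\<in>S i. R i x"
  proof (rule ccontr)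
    assume "\<not> ?thesis"
    then obtain i x where ix: "i \<in> I" "x \<in> S i" "\<not> R i x" by blast
    have "(\<Sum>i\<in>I. card {x\<in>S i. R i x}) < (\<Sum>i\<in>I. card (S i))"
    proof (rule sum_strict_mono_ex1[OF I])
      show "\<forall>i\<in>I. card {x\<in>S i. R i x} \<le> card (S i)"
        using S by (auto intro: card_mono)
      show "\<exists>i\<in>I. card {x\<in>S i. R i x} < card (S i)"
        using ix S by (intro bexI[of _ i] psubset_card_mono) auto
    qed
    then show False using h by simp
  qed
next
  assume "\<forall>i\<in>I. \<forall>x\<in>S i. R i x"
  then have "\<And>i. i \<in> I \<Longrightarrow> {x\<in>S i. R i x} = S i" by auto
  then show "(\<Sum>i\<in>I. card {x\<in>S i. R i x}) = (\<Sum>i\<in>I. card (S i))" by (simp cong: sum.cong)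
qed

lemma gauss2: "2 * (\<Sum>j=1..k. j - 1) = k * (k - (1::nat))"
proof (induction k)
  case 0 then show ?case by simp
next
  case (Suc k)
  then show ?case by (cases k) (simp_all add: algebra_simps)
qed

lemma part_b_sum:
  assumes A: "finite A" "A \<noteq> {}" and pos: "\<And>y. y \<in> A \<Longrightarrow> y > (0::nat)"
  shows "(\<Sum>d = 1..Max A. of_int (moebius_mu d) * real (v A d) * (real (v A d) - 1))
       = real (\<Sum>y\<in>A. card {x\<in>A - {y}. coprime x y})"
proof -
  have step1: "real (v A d) * (real (v A d) - 1)
      = (\<Sum>y\<in>A. if d dvd y then real (v (A - {y}) d) else 0)" for d
  proof -
    have "(\<Sum>y\<in>A. if d dvd y then real (v (A - {y}) d) else 0)
        = (\<Sum>y\<in>{y\<in>A. d dvd y}. real (v (A - {y}) d))"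
      using A by (simp add: sum.inter_filter)
    also have "\<dots> = (\<Sum>y\<in>{y\<in>A. d dvd y}. real (v A d) - 1)"
    proof (rule sum.cong)
      fix y assume y: "y \<in> {y\<in>A. d dvd y}"
      have "{x\<in>A - {y}. d dvd x} = {x\<in>A. d dvd x} - {y}" by auto
      then have "v (A - {y}) d = v A d - 1" using y unfolding v_def by simp
      moreover have "v A d \<ge> 1" unfolding v_def using y A
        by (metis (no_types, lifting) One_nat_def Suc_leI card_gt_0_iff empty_iff finite_subset mem_Collect_eq subsetI)
      ultimately show "real (v (A - {y}) d) = real (v A d) - 1" by (simp add: of_nat_diff)
    qed simp
    also have "\<dots> = real (v A d) * (real (v A d) - 1)" unfolding v_def by simp
    finally show ?thesis by simp
  qed
  have "(\<Sum>d = 1..Max A. of_int (moebius_mu d) * real (v A d) * (real (v A d) - 1))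
      = (\<Sum>d = 1..Max A. \<Sum>y\<in>A. if d dvd y then of_int (moebius_mu d) * real (v (A - {y}) d) else 0)"
    by (simp add: mult.assoc step1 sum_distrib_left if_distrib cong: if_cong)
  also have "\<dots> = (\<Sum>y\<in>A. \<Sum>d = 1..Max A. if d dvd y then of_int (moebius_mu d) * real (v (A - {y}) d) else 0)"
    by (rule sum.swap)
  also have "\<dots> = (\<Sum>y\<in>A. \<Sum>d | d dvd y. of_int (moebius_mu d) * real (v (A - {y}) d))"
  proof (rule sum.cong)
    fix y assume y: "y \<in> A"
    have "{d \<in> {1..Max A}. d dvd y} = {d. d dvd y}"
      using pos[OF y] Max_ge[OF A(1) y] by (auto dest: dvd_imp_le intro: Nat.gr0I)
    then show "(\<Sum>d = 1..Max A. if d dvd y then of_int (moebius_mu d) * real (v (A - {y}) d) else 0)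
        = (\<Sum>d | d dvd y. of_int (moebius_mu d) * real (v (A - {y}) d))"
      by (simp add: sum.inter_filter[symmetric])
  qed simp
  also have "\<dots> = (\<Sum>y\<in>A. real (card {x\<in>A - {y}. coprime x y}))"
    by (rule sum.cong[OF refl], rule count_coprime) (use A pos in auto)
  finally show ?thesis by simp
qed


theorem theorem5p5:
  fixes a :: "nat \<Rightarrow> nat" and k :: nat and \<tau> :: "nat \<Rightarrow> nat" and A :: "nat set"
  assumes k: "k \<ge> 1"
    and a_inj: "inj_on a {1..k}"
    and a_pos: "\<And>i. i \<in> {1..k} \<Longrightarrow> a i > 0"
    and A_def: "A = a ` {1..k}"
    and tau: "\<tau> permutes {1..k}"
  shows
    "((\<forall>x\<in>A. \<forall>y\<in>A. x \<noteq> y \<longrightarrow> gcd x y = 1)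
      \<longleftrightarrow> 2 * real (card A) - 1
          = sqrt (1 + 4 * (\<Sum>d = 1..Max A. of_int (moebius_mu d) * real (v A d) * (real (v A d) - 1))))
     \<and>
     ((\<forall>x\<in>A. \<forall>y\<in>A. x \<noteq> y \<longrightarrow> gcd x y = 1)
      \<longleftrightarrow> 2 * real (card A) - 1
          = sqrt (1 + 8 * (\<Sum>j = 1..k. \<Sum>d | d dvd a (\<tau> j).
                 of_int (moebius_mu d) * real (v ((a \<circ> \<tau>) ` {1..j - 1}) d))))"
proof -
  define P where "P = (\<forall>x\<in>A. \<forall>y\<in>A. x \<noteq> y \<longrightarrow> gcd x y = 1)"
  define b where "b = a \<circ> \<tau>"
  have timg: "\<tau> ` {1..k} = {1..k}" using tau by (rule permutes_image)
  have tin: "\<And>j. j \<in> {1..k} \<Longrightarrow> \<tau> j \<in> {1..k}" using timg by blast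
  have binj: "inj_on b {1..k}" unfolding b_def
    by (rule comp_inj_on[OF permutes_inj_on[OF tau]]) (subst timg, rule a_inj)
  have bimg: "b ` {1..k} = A" unfolding b_def A_def image_comp[symmetric] timg ..
  have cardA: "card A = k" unfolding A_def using a_inj by (simp add: card_image)
  have finA: "finite A" "A \<noteq> {}" using cardA k by (auto simp: card_ge_0_finite)
  define C where "C = (\<Sum>y\<in>A. card {x\<in>A - {y}. coprime x y})"
  have posA: "\<And>y. y \<in> A \<Longrightarrow> y > 0" using a_pos A_def by auto
  have Cb: "(\<Sum>d = 1..Max A. of_int (moebius_mu d) * real (v A d) * (real (v A d) - 1)) = real C"
    unfolding C_def by (rule part_b_sum[OF finA posA])
  have sumA: "(\<Sum>y\<in>A. card (A - {y})) = k * (k - 1)" using finA cardA by simp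
  have CP: "C = k * (k - 1) \<longleftrightarrow> P"
  proof -
    have "C = k * (k - 1) \<longleftrightarrow> (\<forall>y\<in>A. \<forall>x\<in>A - {y}. coprime x y)"
      unfolding C_def sumA[symmetric] by (rule card_filter_sum_eq) (use finA in auto)
    also have "\<dots> \<longleftrightarrow> P" unfolding P_def by (auto simp: coprime_iff_gcd_eq_1)
    finally show ?thesis .
  qed
  have realk: "real (k * (k - 1)) = real k * (real k - 1)" using k by (simp add: of_nat_diff)
  have partb: "P \<longleftrightarrow> 2 * real (card A) - 1
          = sqrt (1 + 4 * (\<Sum>d = 1..Max A. of_int (moebius_mu d) * real (v A d) * (real (v A d) - 1)))"
  proof -
    have eqC: "real C = real k * (real k - 1) \<longleftrightarrow> P" using CP realk by (metis of_nat_eq_iff)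
    show ?thesis unfolding Cb cardA sqrt_eq[OF of_nat_0_le_iff k] eqC ..
  qed
  define T where "T = (\<Sum>j=1..k. card {x\<in>b ` {1..j-1}. coprime x (b j)})"
  have Tc: "(\<Sum>j = 1..k. \<Sum>d | d dvd a (\<tau> j).
                 of_int (moebius_mu d) * real (v ((a \<circ> \<tau>) ` {1..j - 1}) d)) = real T"
    unfolding T_def of_nat_sum
  proof (rule sum.cong[OF refl])
    fix j assume j: "j \<in> {1..k}"
    have "a (\<tau> j) > 0" using a_pos tin[OF j] by simp
    then show "(\<Sum>d | d dvd a (\<tau> j). of_int (moebius_mu d) * real (v ((a \<circ> \<tau>) ` {1..j - 1}) d))
        = real (card {x\<in>b ` {1..j-1}. coprime x (b j)})"
      unfolding b_def using count_coprime[of "(a \<circ> \<tau>) ` {1..j-1}" "a (\<tau> j)"] by simp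
  qed
  have cardB: "card (b ` {1..j-1}) = j - 1" if "j \<in> {1..k}" for j
  proof -
    have "inj_on b {1..j-1}" by (rule inj_on_subset[OF binj]) (use that in auto)
    then show ?thesis by (simp add: card_image)
  qed
  have sumB: "(\<Sum>j=1..k. card (b ` {1..j-1})) = (\<Sum>j=1..k. j - 1)"
    by (rule sum.cong[OF refl], rule cardB)
  have TP: "2 * T = k * (k - 1) \<longleftrightarrow> P"
  proof -
    have "2 * T = k * (k - 1) \<longleftrightarrow> T = (\<Sum>j=1..k. card (b ` {1..j-1}))"
      unfolding sumB gauss2[symmetric] by simp
    also have "\<dots> \<longleftrightarrow> (\<forall>j\<in>{1..k}. \<forall>x\<in>b ` {1..j-1}. coprime x (b j))"
      unfolding T_def by (rule card_filter_sum_eq) auto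
    also have "\<dots> \<longleftrightarrow> P"
    proof
      assume h: "\<forall>j\<in>{1..k}. \<forall>x\<in>b ` {1..j-1}. coprime x (b j)"
      show P unfolding P_def
      proof (intro ballI impI)
        fix x y assume xy: "x \<in> A" "y \<in> A" "x \<noteq> y"
        then obtain i j where ij: "i \<in> {1..k}" "j \<in> {1..k}" "x = b i" "y = b j"
          using bimg by blast
        have "i \<noteq> j" using xy ij by auto
        then have "coprime x y"
        proof (cases "i < j")
          case True
          then show ?thesis using h ij by auto
        next
          case False
          then have "j < i" using \<open>i \<noteq> j\<close> by simp
          then have "coprime y x" using h ij by auto
          then show ?thesis by (simp add: coprime_commute)
        qed
        then show "gcd x y = 1" by (simp add: coprime_iff_gcd_eq_1)
      qed
    next
      assume P
      show "\<forall>j\<in>{1..k}. \<forall>x\<in>b ` {1..j-1}. coprime x (b j)"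
      proof (intro ballI)
        fix j x assume j: "j \<in> {1..k}" and x: "x \<in> b ` {1..j-1}"
        then obtain i where i: "i \<in> {1..j-1}" "x = b i" by blast
        have ik: "i \<in> {1..k}" using i j by auto
        have "b i \<noteq> b j" using binj ik j i inj_onD[OF binj, of i j] by auto
        moreover have "b i \<in> A" "b j \<in> A" using ik j bimg by auto
        ultimately show "coprime x (b j)" using \<open>P\<close> i unfolding P_def
          by (simp add: coprime_iff_gcd_eq_1)
      qed
    qed
    finally show ?thesis .
  qed
  have partc: "P \<longleftrightarrow> 2 * real (card A) - 1
          = sqrt (1 + 8 * (\<Sum>j = 1..k. \<Sum>d | d dvd a (\<tau> j).
                 of_int (moebius_mu d) * real (v ((a \<circ> \<tau>) ` {1..j - 1}) d)))"
  proof -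
    have e: "1 + 8 * real T = 1 + 4 * (2 * real T)" by simp
    have "real (2 * T) = real (k * (k - 1)) \<longleftrightarrow> P" using TP by (metis of_nat_eq_iff)
    then have eqT: "2 * real T = real k * (real k - 1) \<longleftrightarrow> P" unfolding realk by simp
    have nn: "2 * real T \<ge> 0" by simp
    show ?thesis unfolding Tc cardA e sqrt_eq[OF nn k] eqT ..
  qed
  show ?thesis using partb partc unfolding P_def by blast
qed

end
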